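(* Let $p$ be a prime, $k\geq 1$, $j\geq 0$ integers, and $r$ an integer with $1\leq r\leq p-1$. If $d_k(pn+r)\equiv 0\pmod p$ for all $n\geq 0$, then $d_{pj+k}(pn+r)\equiv 0\pmod p$ for all $n\geq 0$.
   Context: For each integer $k\geq 1$, the numbers $d_k(n)$ are defined by $\sum_{n\geq 0} d_k(n)q^n = \frac{f_2^k}{f_1^{3k+1}}$, where $f_r = \prod_{i\geq 1}(1-q^{ri})$. *)

theory Defs
  imports "HOL-Computational_Algebra.Formal_Power_Series"
begin

text \<open>f_r = prod_{i>=1} (1 - q^(r i)) as an integer formal power series.
  The n-th coefficient of the infinite product equals the n-th coefficient of
  the finite partial product over i = 1..n (later factors are 1 mod q^(n+1)) when r >= 1.\<close>
definition f_euler :: "nat \<Rightarrow> int fps" where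
  "f_euler r = Abs_fps (\<lambda>n. fps_nth (\<Prod>i\<in>{1..n}. (1 - fps_X ^ (r * i))) n)"

definition f1_inv :: "int fps" where
  "f1_inv = fps_right_inverse (f_euler 1) 1"

definition d :: "nat \<Rightarrow> nat \<Rightarrow> int" where
  "d k n = fps_nth (f_euler 2 ^ k * f1_inv ^ (3 * k + 1)) n"

end

theory Submission
  imports Defs "HOL-Computational_Algebra.Primes"
begin

unbundle fps_syntax

definition sp :: "nat \<Rightarrow> int fps \<Rightarrow> bool" where
  "sp p A \<longleftrightarrow> (\<forall>n. \<not> p dvd n \<longrightarrow> int p dvd A $ n)"

definition allp :: "nat \<Rightarrow> int fps \<Rightarrow> bool" where
  "allp p A \<longleftrightarrow> (\<forall>n. int p dvd A $ n)"

lemma allp_sp: "allp p A \<Longrightarrow> sp p A"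
  by (auto simp: allp_def sp_def)

lemma sp_add: "sp p A \<Longrightarrow> sp p B \<Longrightarrow> sp p (A + B)"
  by (auto simp: sp_def)

lemma allp_mult: "allp p A \<Longrightarrow> allp p (A * B)"
  unfolding allp_def fps_mult_nth by (auto intro!: dvd_sum)

lemma allp_add: "allp p A \<Longrightarrow> allp p B \<Longrightarrow> allp p (A + B)"
  by (auto simp: allp_def)

lemma allp_sum: "(\<And>i. i \<in> I \<Longrightarrow> allp p (f i)) \<Longrightarrow> allp p (sum f I)"
  unfolding allp_def fps_sum_nth by (auto intro!: dvd_sum)

lemma allp_const: "allp p (fps_const (int p) * A)"
  by (simp add: allp_def)

lemma sp_mult: "sp p A \<Longrightarrow> sp p B \<Longrightarrow> sp p (A * B)"
  unfolding sp_def fps_mult_nth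
proof (intro allI impI dvd_sum)
  fix n i assume A: "\<forall>n. \<not> p dvd n \<longrightarrow> int p dvd A $ n" and B: "\<forall>n. \<not> p dvd n \<longrightarrow> int p dvd B $ n"
    and n: "\<not> p dvd n" and i: "i \<in> {0..n}"
  show "int p dvd A $ i * B $ (n - i)"
  proof (cases "p dvd i")
    case True
    have "\<not> p dvd (n - i)"
    proof
      assume "p dvd (n - i)"
      with True have "p dvd (i + (n - i))" by (rule dvd_add)
      with i n show False by simp
    qed
    with B show ?thesis by simp
  next
    case False with A show ?thesis by simp
  qed
qed

lemma sp_one: "sp p 1"
  by (auto simp: sp_def)

lemma sp_power: "sp p A \<Longrightarrow> sp p (A ^ m)"
  by (induction m) (auto intro: sp_mult sp_one)

lemma power_nth_trunc:
  assumes "\<And>i. i \<le> n \<Longrightarrow> A $ i = B $ i"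
  shows "(A ^ m) $ n = ((B::int fps) ^ m) $ n"
  using assms
proof (induction m arbitrary: n)
  case 0 then show ?case by simp
next
  case (Suc m)
  have "(A ^ Suc m) $ n = (\<Sum>i=0..n. A$i * (A^m) $ (n - i))" by (simp add: fps_mult_nth)
  also have "\<dots> = (\<Sum>i=0..n. B$i * (B^m) $ (n - i))"
    by (intro sum.cong refl) (simp add: Suc.prems Suc.IH)
  also have "\<dots> = (B ^ Suc m) $ n" by (simp add: fps_mult_nth)
  finally show ?case .
qed

lemma sp_frob_add:
  assumes "prime p" "sp p (A ^ p)" "sp p (B ^ p)"
  shows "sp p ((A + B) ^ p)"
proof -
  have p0: "p > 0" using assms(1) prime_gt_0_nat by blast
  have "(A + B) ^ p = (\<Sum>k\<le>p. of_nat (p choose k) * A^k * B^(p-k))"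
    by (rule binomial_ring)
  also have "\<dots> = (\<Sum>k\<in>{0<..<p}. of_nat (p choose k) * A^k * B^(p-k)) + A^p + B^p"
  proof -
    have "{..p} = insert 0 (insert p {0<..<p})" using p0 by auto
    then show ?thesis using p0 by (simp add: algebra_simps)
  qed
  finally have eq: "(A + B) ^ p = (\<Sum>k\<in>{0<..<p}. of_nat (p choose k) * A^k * B^(p-k)) + A^p + B^p" .
  have "allp p (\<Sum>k\<in>{0<..<p}. of_nat (p choose k) * A^k * B^(p-k))"
  proof (rule allp_sum)
    fix k assume k: "k \<in> {0<..<p}"
    then obtain c where c: "p choose k = p * c"
      using dvd_choose_prime[of k p] assms(1) by (auto elim!: dvdE)
    have cc: "(of_nat (p choose k) :: int fps) = fps_const (int p) * of_nat c"
      by (simp add: c fps_of_nat)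
    have ee: "(of_nat (p choose k) :: int fps) * A^k * B^(p-k) = fps_const (int p) * (of_nat c * A^k * B^(p-k))"
      by (simp only: cc mult.assoc)
    show "allp p (of_nat (p choose k) * A^k * B^(p-k))" unfolding ee by (rule allp_const)
  qed
  then show ?thesis unfolding eq by (intro sp_add allp_sp assms)
qed

lemma sp_monom: "p > 0 \<Longrightarrow> sp p ((fps_const c * fps_X ^ N) ^ p)"
  by (auto simp: sp_def power_mult_distrib power_mult[symmetric])

lemma sp_poly: "prime p \<Longrightarrow> sp p ((\<Sum>i\<le>N. fps_const (a i) * fps_X ^ i) ^ p)"
proof (induction N)
  case 0 then show ?case using sp_monom[of p "a 0" 0] prime_gt_0_nat by simp
next
  case (Suc N) then show ?case
    using sp_monom[of p "a (Suc N)" "Suc N"] prime_gt_0_nat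
    by (simp add: sp_frob_add)
qed

lemma sp_frob: assumes "prime p" shows "sp p ((A::int fps) ^ p)"
  unfolding sp_def
proof (intro allI impI)
  fix n assume "\<not> p dvd n"
  let ?T = "\<Sum>i\<le>n. fps_const (A $ i) * fps_X ^ i"
  have "(A ^ p) $ n = (?T ^ p) $ n"
    by (rule power_nth_trunc) (simp add: fps_sum_nth if_distrib[where f="times _"] cong: if_cong)
  with sp_poly[OF assms, where N=n and a="\<lambda>i. A $ i"] \<open>\<not> p dvd n\<close> show "int p dvd (A ^ p) $ n"
    by (simp add: sp_def)
qed

theorem theorem4p4:
  fixes p k j r :: nat
  assumes "prime p" and "k \<ge> 1" and "1 \<le> r" and "r \<le> p - 1"
    and "\<forall>n. int p dvd d k (p * n + r)"
  shows "\<forall>n. int p dvd d (p * j + k) (p * n + r)"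
proof
  fix n
  define F where "F = f_euler 2 ^ k * f1_inv ^ (3 * k + 1)"
  define Y where "Y = ((f_euler 2 * f1_inv ^ 3) ^ p) ^ j"
  have eq: "f_euler 2 ^ (p * j + k) * f1_inv ^ (3 * (p * j + k) + 1) = Y * F"
  proof -
    have e1: "f_euler 2 ^ (p * j + k) = (f_euler 2 ^ p) ^ j * f_euler 2 ^ k"
      by (simp add: power_add power_mult)
    have e2: "f1_inv ^ (3 * (p * j + k) + 1) = ((f1_inv ^ 3) ^ p) ^ j * f1_inv ^ (3 * k + 1)"
      by (simp add: power_add power_mult[symmetric] algebra_simps)
    have e3: "Y = (f_euler 2 ^ p) ^ j * ((f1_inv ^ 3) ^ p) ^ j"
      unfolding Y_def by (simp add: power_mult_distrib)
    show ?thesis unfolding e1 e2 e3 F_def by (simp add: algebra_simps)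
  qed
  have spY: "sp p Y" unfolding Y_def by (intro sp_power sp_frob assms(1))
  have p0: "p > 0" using assms(1) prime_gt_0_nat by blast
  have "d (p * j + k) (p * n + r) = (\<Sum>i=0..p*n+r. Y$i * F$(p*n+r-i))"
    unfolding d_def eq fps_mult_nth ..
  also have "int p dvd \<dots>"
  proof (rule dvd_sum)
    fix i assume i: "i \<in> {0..p*n+r}"
    show "int p dvd Y$i * F$(p*n+r-i)"
    proof (cases "p dvd i")
      case False with spY show ?thesis by (simp add: sp_def)
    next
      case True
      then obtain m where m: "i = p * m" by blast
      have "p * m < p * (n + 1)" using i m assms(4) p0 by auto
      then have "m \<le> n" using mult_less_cancel1[of p m "n+1"] by simp
      then have "p*n+r-i = p * (n - m) + r" using m by (simp add: diff_mult_distrib2)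
      then show ?thesis using assms(5) unfolding F_def d_def by simp
    qed
  qed
  finally show "int p dvd d (p * j + k) (p * n + r)" .
qed

end
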